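(* Let $N=2^L$ ($L\ge1$), channel numbers $r_0,\dots,r_{L-1}\ge1$, an output index $y$, and pairwise distinct covering templates $\mathbf x^{(1)},\dots,\mathbf x^{(M)}\in\mathbb R^s$ be given. Suppose all parameters of the deep ConvNet with ReLU activation and max pooling (the representation parameters $\theta_1,\dots,\theta_M\in\Theta$ and all linear weights $\mathbf a^{l,j,\gamma}$) are drawn from a distribution having a continuous probability density function that vanishes nowhere. Then with positive probability the resulting score function $h^D_y$ can be realized by a shallow ConvNet with ReLU activation and max pooling having a single hidden channel ($Z=1$), i.e. there exist $f_{\tilde\theta_1},\dots,f_{\tilde\theta_M}\in\mathcal F$ and weights for this shallow ConvNet with $\mathcal A(h^S_y)=\mathcal A(h^D_y)$.
   Context: Inputs are $X=(\mathbf x_1,\dots,\mathbf x_N)\in(\mathbb R^s)^N$. Representation functions are taken from a parametric family $\mathcal F=\{f_\theta:\mathbb R^s\to\mathbb R:\theta\in\Theta\}$, $\Theta$ an open subset of a Euclidean space, assumed throughout to satisfy: (continuity) $f_\theta(\mathbf x)$ is continuous in $\theta$ and $\mathbf x$; (non-degeneracy) for any pairwise distinct $\mathbf x^{(1)},\dots,\mathbf x^{(M)}$ there exist $f_{\theta_1},\dots,f_{\theta_M}\in\mathcal F$ with $F=(f_{\theta_d}(\mathbf x^{(i)}))_{i,d}$ non-singular. ReLU activation with max pooling: $\sigma(z)=\max\{0,z\}$, $P=\max$. Shallow ConvNet with $Z$ hidden channels: $h^S_y(X)=\sum_{z=1}^Z a^y_z\,P_{i\in[N]}\big(\sigma(\sum_{d=1}^M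 a^{z,i}_d f_{\theta_d}(\mathbf x_i))\big)$ with $f_{\theta_d}\in\mathcal F$, $\mathbf a^{z,i}\in\mathbb R^M$, $\mathbf a^y\in\mathbb R^Z$. Deep ConvNet: with $f_{\theta_d}\in\mathcal F$, $\mathbf a^{0,j,\gamma}\in\mathbb R^M$ ($j\in[N],\gamma\in[r_0]$), $\mathbf a^{l,j,\gamma}\in\mathbb R^{r_{l-1}}$ ($l\in[L-1]$, $j\in[N/2^l]$, $\gamma\in[r_l]$), $\mathbf a^{L,1,y}\in\mathbb R^{r_{L-1}}$: $u^0_{j,\gamma}=\sigma(\sum_d a^{0,j,\gamma}_d f_{\theta_d}(\mathbf x_j))$; for $l=0,\dots,L-1$, $v^l_{j,\gamma}=P(u^l_{2j-1,\gamma},u^l_{2j,\gamma})$ ($j\in[N/2^{l+1}]$), for $l\ge1$, $u^l_{j,\gamma}=\sigma(\sum_\alpha a^{l,j,\gamma}_\alpha v^{l-1}_{j,\alpha})$ ($j\in[N/2^l]$); $h^D_y(X)=\sum_\alpha a^{L,1,y}_\alpha v^{L-1}_{1,\alpha}$. Grid tensor w.r.t. templates $\mathbf x^{(1)},\dots,\mathbf x^{(M)}$: $\mathcal A(h)_{d_1,\dots,d_N}=h(\mathbf x^{(d_1)},\dots,\mathbf x^{(d_N)})$. Templates are covering if score functions are identified whenever their grid tensors coincide (so equal grid tensors means one network realizes the other's score function). *)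

theory Defs
  imports "HOL-Probability.Probability" "Jordan_Normal_Form.Determinant"
begin

definition relu :: "real \<Rightarrow> real" where
  "relu z = max 0 z"

definition nondegenerate_family ::
  "('p \<Rightarrow> 'x \<Rightarrow> real) \<Rightarrow> 'p set \<Rightarrow> bool" where
  "nondegenerate_family f Theta \<longleftrightarrow>
     (\<forall>(K::nat) (xs::nat \<Rightarrow> 'x). inj_on xs {1..K} \<longrightarrow>
        (\<exists>th::nat \<Rightarrow> 'p. (\<forall>d\<in>{1..K}. th d \<in> Theta) \<and>
           det (Matrix.mat K K (\<lambda>(i, d). f (th (d + 1)) (xs (i + 1)))) \<noteq> 0))"

text \<open>Weights a(l, j, gamma, alpha) = a^{l,j,gamma}_alpha;
  th d = theta_d; X i = x_i (i in 1..N).  deep_u l j gamma = u^l_{j,gamma}; the pooled value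
  v^l_{j,gamma} = max (u^l_{2j-1,gamma}) (u^l_{2j,gamma}) is inlined.\<close>
fun deep_u ::
  "('p \<Rightarrow> 'x \<Rightarrow> real) \<Rightarrow> nat \<Rightarrow> (nat \<Rightarrow> nat) \<Rightarrow> (nat \<Rightarrow> 'p) \<Rightarrow>
   (nat \<times> nat \<times> nat \<times> nat \<Rightarrow> real) \<Rightarrow> (nat \<Rightarrow> 'x) \<Rightarrow> nat \<Rightarrow> nat \<Rightarrow> nat \<Rightarrow> real" where
  "deep_u f M r th a X 0 j g =
     relu (\<Sum>d = 1..M. a (0, j, g, d) * f (th d) (X j))"
| "deep_u f M r th a X (Suc l) j g =
     relu (\<Sum>al = 1..r l. a (Suc l, j, g, al) *
             max (deep_u f M r th a X l (2*j - 1) al) (deep_u f M r th a X l (2*j) al))"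

definition deep_score ::
  "('p \<Rightarrow> 'x \<Rightarrow> real) \<Rightarrow> nat \<Rightarrow> nat \<Rightarrow> (nat \<Rightarrow> nat) \<Rightarrow> nat \<Rightarrow> (nat \<Rightarrow> 'p) \<Rightarrow>
   (nat \<times> nat \<times> nat \<times> nat \<Rightarrow> real) \<Rightarrow> (nat \<Rightarrow> 'x) \<Rightarrow> real" where
  "deep_score f M L r y th a X =
     (\<Sum>al = 1..r (L - 1). a (L, 1, y, al) *
        max (deep_u f M r th a X (L - 1) 1 al) (deep_u f M r th a X (L - 1) 2 al))"

definition deep_weight_index :: "nat \<Rightarrow> nat \<Rightarrow> nat \<Rightarrow> (nat \<Rightarrow> nat) \<Rightarrow> nat \<Rightarrow> (nat \<times> nat \<times> nat \<times> nat) set" where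
  "deep_weight_index M N L r y =
     {(0, j, g, d) | j g d. j \<in> {1..N} \<and> g \<in> {1..r 0} \<and> d \<in> {1..M}}
   \<union> {(l, j, g, al) | l j g al. l \<in> {1..L-1} \<and> j \<in> {1..N div 2^l} \<and> g \<in> {1..r l} \<and> al \<in> {1..r (l-1)}}
   \<union> {(L, 1, y, al) | al. al \<in> {1..r (L-1)}}"

text \<open>Shallow ConvNet with ReLU, max pooling and a single hidden channel (Z = 1):
  h^S_y(X) = b * max_{i in [N]} relu (sum_d c(i,d) f(th d)(x_i)),  b = a^y_1, c(i,d) = a^{1,i}_d.\<close>
definition shallow1_score ::
  "('p \<Rightarrow> 'x \<Rightarrow> real) \<Rightarrow> nat \<Rightarrow> nat \<Rightarrow> (nat \<Rightarrow> 'p) \<Rightarrow> real \<Rightarrow> (nat \<Rightarrow> nat \<Rightarrow> real) \<Rightarrow>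
   (nat \<Rightarrow> 'x) \<Rightarrow> real" where
  "shallow1_score f M N th b c X =
     b * Max ((\<lambda>i. relu (\<Sum>d = 1..M. c i d * f (th d) (X i))) ` {1..N})"

text \<open>Grid tensor of a score function h w.r.t. templates x(1..M):
  A(h)_{d_1..d_N} = h(x(d_1),...,x(d_N)), as a function on {1..N} -> {1..M}.\<close>
definition grid_tensor :: "(nat \<Rightarrow> 'x) \<Rightarrow> nat \<Rightarrow> nat \<Rightarrow> ((nat \<Rightarrow> 'x) \<Rightarrow> real) \<Rightarrow> (nat \<Rightarrow> nat) \<Rightarrow> real" where
  "grid_tensor x M N h = restrict (\<lambda>dd. h (\<lambda>i. x (dd i))) (PiE {1..N} (\<lambda>_. {1..M}))"

definition deep_param_measure ::
  "nat \<Rightarrow> (nat \<times> nat \<times> nat \<times> nat) set \<Rightarrow> ((nat \<Rightarrow> 'p::euclidean_space) \<times> (nat \<times> nat \<times> nat \<times> nat \<Rightarrow> real)) measure" where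
  "deep_param_measure M W = (PiM {1..M} (\<lambda>_. lborel)) \<Otimes>\<^sub>M (PiM W (\<lambda>_. lborel))"

end

theory Submission
  imports Defs
begin


lemma solve_lin:
  fixes F :: "nat \<Rightarrow> nat \<Rightarrow> real"
  assumes "det (Matrix.mat n n (\<lambda>(i, d). F i d)) \<noteq> 0"
  shows "\<exists>v. \<forall>i<n. (\<Sum>d<n. F i d * v d) = -1"
proof -
  let ?A = "Matrix.mat n n (\<lambda>(i, d). F i d)"
  have A: "?A \<in> carrier_mat n n" by simp
  from det_non_zero_imp_unit[OF A assms, of "()"]
  obtain B where AB: "?A * B = 1\<^sub>m n" and B: "B \<in> carrier_mat n n"
    unfolding Units_def ring_mat_def by auto
  define w :: "real vec" where "w = vec n (\<lambda>_. -1)"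
  define v where "v = B *\<^sub>v w"
  have "?A *\<^sub>v v = (?A * B) *\<^sub>v w" unfolding v_def using B A
    by (subst assoc_mult_mat_vec[OF A B]) (auto simp: w_def)
  also have "\<dots> = w" unfolding AB w_def by simp
  finally have eq: "?A *\<^sub>v v = w" .
  have dv: "dim_vec v = n" unfolding v_def using B by simp
  show ?thesis
  proof (intro exI allI impI)
    fix i assume i: "i < n"
    have "(?A *\<^sub>v v) $ i = -1" using eq i by (simp add: w_def)
    moreover have "(?A *\<^sub>v v) $ i = (\<Sum>d<n. F i d * v $ d)"
      using i dv by (simp add: mult_mat_vec_def scalar_prod_def row_def atLeast0LessThan mult.commute)
    ultimately show "(\<Sum>d<n. F i d * v $ d) = -1" by simp
  qed
qed

lemma deep_zero:
  assumes h: "\<And>j g. 1 \<le> j \<Longrightarrow> j \<le> N \<Longrightarrow> g \<in> {1..r 0} \<Longrightarrow> (\<Sum>d = 1..M. a (0, j, g, d) * f (th d) (X j)) \<le> 0"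
  shows "1 \<le> j \<Longrightarrow> j * 2^l \<le> N \<Longrightarrow> g \<in> {1..r l} \<Longrightarrow> deep_u f M r th a X l j g = 0"
proof (induction l arbitrary: j g)
  case 0
  then show ?case using h[of j g] by (simp add: relu_def)
next
  case (Suc l)
  have "\<And>al. al \<in> {1..r l} \<Longrightarrow> deep_u f M r th a X l (2*j - 1) al = 0 \<and> deep_u f M r th a X l (2*j) al = 0"
  proof -
    fix al assume al: "al \<in> {1..r l}"
    have "(2*j - 1) * 2^l \<le> N" "2*j*2^l \<le> N" using Suc.prems(2)
      by (simp_all add: algebra_simps)
    then show "deep_u f M r th a X l (2*j - 1) al = 0 \<and> deep_u f M r th a X l (2*j) al = 0"
      using Suc.IH al Suc.prems(1) by auto
  qed
  then show ?case by (simp add: relu_def)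
qed


lemma key_ineq:
  fixes c a fv gv :: "'i \<Rightarrow> real" and I :: "'i set"
  assumes fin: "finite I" and sc: "(\<Sum>d\<in>I. c d * gv d) = -1"
    and h1: "\<forall>d\<in>I. \<bar>fv d - gv d\<bar> < \<eta>"
    and h2: "\<forall>d\<in>I. \<bar>a d - c d\<bar> < \<epsilon>"
    and h3: "\<forall>d\<in>I. \<bar>gv d\<bar> \<le> B"
    and h4: "(\<Sum>d\<in>I. \<bar>c d\<bar>) * \<eta> \<le> 1/4"
    and h5: "real (card I) * (\<epsilon> * (B + \<eta>)) \<le> 1/4"
  shows "(\<Sum>d\<in>I. a d * fv d) < 0"
proof -
  have e1: "(\<Sum>d\<in>I. a d * fv d) = (\<Sum>d\<in>I. c d * gv d) + (\<Sum>d\<in>I. c d * (fv d - gv d)) + (\<Sum>d\<in>I. (a d - c d) * fv d)"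
    by (simp add: sum.distrib[symmetric] algebra_simps)
  have "\<bar>\<Sum>d\<in>I. c d * (fv d - gv d)\<bar> \<le> (\<Sum>d\<in>I. \<bar>c d * (fv d - gv d)\<bar>)" by (rule sum_abs)
  also have "\<dots> \<le> (\<Sum>d\<in>I. \<bar>c d\<bar> * \<eta>)"
  proof (rule sum_mono)
    fix d assume "d \<in> I"
    then show "\<bar>c d * (fv d - gv d)\<bar> \<le> \<bar>c d\<bar> * \<eta>" using h1
      by (simp add: abs_mult mult_left_mono less_imp_le)
  qed
  also have "\<dots> = (\<Sum>d\<in>I. \<bar>c d\<bar>) * \<eta>" by (simp add: sum_distrib_right)
  finally have e2: "\<bar>\<Sum>d\<in>I. c d * (fv d - gv d)\<bar> \<le> 1/4" using h4 by linarith
  have "\<bar>\<Sum>d\<in>I. (a d - c d) * fv d\<bar> \<le> (\<Sum>d\<in>I. \<bar>(a d - c d) * fv d\<bar>)" by (rule sum_abs)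
  also have "\<dots> \<le> (\<Sum>d\<in>I. \<epsilon> * (B + \<eta>))"
  proof (rule sum_mono)
    fix d assume d: "d \<in> I"
    have "\<bar>fv d\<bar> \<le> B + \<eta>" using h1 h3 d by force
    then show "\<bar>(a d - c d) * fv d\<bar> \<le> \<epsilon> * (B + \<eta>)" using h2 d
      unfolding abs_mult by (intro mult_mono) auto
  qed
  also have "\<dots> = real (card I) * (\<epsilon> * (B + \<eta>))" by simp
  finally have e3: "\<bar>\<Sum>d\<in>I. (a d - c d) * fv d\<bar> \<le> 1/4" using h5 by linarith
  show ?thesis using e1 e2 e3 sc by linarith
qed

lemma box_pos:
  fixes A :: "'i \<Rightarrow> 'a::euclidean_space set"
  assumes "finite I" "\<And>i. i \<in> I \<Longrightarrow> A i \<in> sets borel" "\<And>i. i \<in> I \<Longrightarrow> emeasure lborel (A i) > 0"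
  shows "emeasure (PiM I (\<lambda>_. lborel)) (PiE I A) > 0"
proof -
  interpret product_sigma_finite "\<lambda>_. lborel :: 'a measure" by standard
  have "emeasure (PiM I (\<lambda>_. lborel)) (PiE I A) = (\<Prod>i\<in>I. emeasure lborel (A i))"
    using assms by (subst emeasure_PiM) auto
  also have "\<dots> > 0" using assms by (auto simp: zero_less_iff_neq_zero prod_zero_iff)
  finally show ?thesis .
qed

lemma sets_box:
  fixes A :: "'i \<Rightarrow> 'a::euclidean_space set"
  assumes "finite I" "\<And>i. i \<in> I \<Longrightarrow> A i \<in> sets borel"
  shows "PiE I A \<in> sets (PiM I (\<lambda>_. lborel))"
  using assms by (intro sets_PiM_I_finite) auto

lemma sf_box:
  assumes "finite I"
  shows "sigma_finite_measure (PiM I (\<lambda>_. lborel :: 'a::euclidean_space measure))"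
proof -
  interpret product_sigma_finite "\<lambda>_. lborel :: 'a measure" by standard
  show ?thesis using sigma_finite[OF assms] .
qed

lemma pair_pos:
  assumes sf: "sigma_finite_measure M2" and A: "A \<in> sets M1" and B: "B \<in> sets M2"
    and "emeasure M1 A > 0" "emeasure M2 B > 0"
  shows "emeasure (M1 \<Otimes>\<^sub>M M2) (A \<times> B) > 0"
proof -
  interpret sigma_finite_measure M2 by fact
  show ?thesis using emeasure_pair_measure_Times[OF A B] assms
    by (simp add: ennreal_zero_less_mult_iff)
qed

lemma dens_pos:
  assumes A: "A \<in> sets M" and pos: "emeasure M A > 0"
    and pm: "p \<in> borel_measurable M" and pp: "\<forall>q\<in>A. p q > (0::real)"
  shows "emeasure (density M (\<lambda>q. ennreal (p q))) A > 0"
proof (rule ccontr)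
  assume "\<not> ?thesis"
  then have z: "emeasure (density M (\<lambda>q. ennreal (p q))) A = 0" by simp
  have pm': "(\<lambda>q. ennreal (p q)) \<in> borel_measurable M" using pm by simp
  have pmi: "(\<lambda>x. ennreal (p x) * indicator A x) \<in> borel_measurable M" using pm' A by (intro borel_measurable_times_ennreal borel_measurable_indicator)
  have "(\<integral>\<^sup>+x. ennreal (p x) * indicator A x \<partial>M) = 0"
    using z emeasure_density[OF pm' A] by argo
  then have ae: "AE x in M. ennreal (p x) * indicator A x = 0"
    using nn_integral_0_iff_AE[OF pmi] by blast
  have imp: "ennreal (p x) * indicator A x = 0 \<longrightarrow> x \<notin> A" for x
  proof (intro impI notI)
    assume h: "ennreal (p x) * indicator A x = 0" and xA: "x \<in> A"
    then have "ennreal (p x) = 0" by simp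
    moreover have "p x > 0" using pp xA by blast
    ultimately show False using ennreal_eq_0_iff[of "p x"] by linarith
  qed
  have ae2: "AE x in M. x \<notin> A"
    using ae by (rule AE_mp) (intro AE_I2 imp)
  have sp: "{x\<in>space M. \<not> (x \<notin> A)} = A" using sets.sets_into_space[OF A] by auto
  have "emeasure M A = 0" by (rule iffD1[OF AE_iff_measurable[OF A sp] ae2])
  then show False using pos by simp
qed

lemma finite_W: "finite (deep_weight_index M N L r y)"
proof -
  have 1: "{(0::nat, j, g, d) | j g d. j \<in> {1..N} \<and> g \<in> {1..r 0} \<and> d \<in> {1..M}} \<subseteq> {0} \<times> {1..N} \<times> {1..r 0} \<times> {1..M}" by auto
  have 2: "{(l, j, g, al) | l j g al. l \<in> {1..L-1} \<and> j \<in> {1..N div 2^l} \<and> g \<in> {1..r l} \<and> al \<in> {1..r (l-1)}}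
     \<subseteq> Sigma {1..L-1} (\<lambda>l. {1..N div 2^l} \<times> {1..r l} \<times> {1..r (l-1)})" by auto
  have 3: "{(L, 1::nat, y, al) | al. al \<in> {1..r (L-1)}} = (\<lambda>al. (L, 1, y, al)) ` {1..r (L-1)}" by auto
  show ?thesis unfolding deep_weight_index_def
    by (intro finite_UnI finite_subset[OF 1] finite_subset[OF 2]) (auto simp: 3)
qed

lemma sum_shift1: "(\<Sum>d = 1..M. g d) = (\<Sum>d<M. g (Suc d))"
  by (induct M) auto

lemma cont_ev:
  assumes "continuous (at a) g" "e > 0"
  shows "eventually (\<lambda>t. dist (g t) (g a) < e) (nhds a)"
proof -
  have "eventually (\<lambda>t. dist (g t) (g a) < e) (at a)"
    using assms by (simp add: continuous_at tendsto_iff)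
  then have "eventually (\<lambda>t. t \<noteq> a \<longrightarrow> dist (g t) (g a) < e) (nhds a)"
    unfolding eventually_at_filter by simp
  then show ?thesis by eventually_elim (use assms(2) in auto)
qed



theorem claim10:
  fixes f :: "'p::euclidean_space \<Rightarrow> real^'s \<Rightarrow> real"
    and Theta :: "'p set"
    and L N M y :: nat and r :: "nat \<Rightarrow> nat"
    and x :: "nat \<Rightarrow> real^'s"
    and p :: "(nat \<Rightarrow> 'p) \<times> (nat \<times> nat \<times> nat \<times> nat \<Rightarrow> real) \<Rightarrow> real"
  defines "W \<equiv> deep_weight_index M N L r y"
  defines "D \<equiv> (PiE {1..M} (\<lambda>_. Theta)) \<times> (PiE W (\<lambda>_. UNIV))"
  assumes Theta_open: "open Theta"
    and f_cont: "continuous_on (Theta \<times> UNIV) (\<lambda>(th, v). f th v)"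
    and f_nondeg: "nondegenerate_family f Theta"
    and L_pos: "L \<ge> 1" and N_def: "N = 2 ^ L"
    and r_pos: "\<forall>l < L. r l \<ge> 1"
    and x_distinct: "inj_on x {1..M}"
    and p_meas: "p \<in> borel_measurable (deep_param_measure M W)"
    and p_cont: "continuous_on D p"
    and p_pos: "\<forall>q\<in>D. p q > 0"
    and p_zero: "\<forall>q. q \<notin> D \<longrightarrow> p q = 0"
    and p_prob: "prob_space (density (deep_param_measure M W) (\<lambda>q. ennreal (p q)))"
  shows "\<exists>A \<in> sets (deep_param_measure M W).
           A \<subseteq> {(th, a) \<in> D. \<exists>th' b c. (\<forall>d\<in>{1..M}. th' d \<in> Theta) \<and>
                 grid_tensor x M N (shallow1_score f M N th' b c)
                   = grid_tensor x M N (deep_score f M L r y th a)}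
         \<and> emeasure (density (deep_param_measure M W) (\<lambda>q. ennreal (p q))) A > 0"
proof -
  have finW: "finite W" unfolding W_def by (rule finite_W)
  obtain th0 where th0T: "\<forall>d\<in>{1..M}. th0 d \<in> Theta"
    and det: "det (Matrix.mat M M (\<lambda>(i, d). f (th0 (d + 1)) (x (i + 1)))) \<noteq> 0"
    using f_nondeg x_distinct unfolding nondegenerate_family_def by blast
  obtain v where v: "\<forall>i<M. (\<Sum>d<M. f (th0 (d + 1)) (x (i + 1)) * v d) = -1"
    using solve_lin[where F = "\<lambda>i d. f (th0 (d + 1)) (x (i + 1))" and n = M] det by auto
  define c where "c d = v (d - 1)" for d
  define F0 where "F0 d i = f (th0 d) (x i)" for d i
  have csum: "(\<Sum>d=1..M. c d * F0 d i) = -1" if i: "i \<in> {1..M}" for i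
  proof -
    have "(\<Sum>d=1..M. c d * F0 d i) = (\<Sum>d<M. f (th0 (d + 1)) (x (i - 1 + 1)) * v d)"
      using i by (subst sum_shift1) (simp add: c_def F0_def mult.commute)
    also have "\<dots> = -1" using v i by (intro v[rule_format]) auto
    finally show ?thesis .
  qed
  define S where "S = (\<Sum>d=1..M. \<bar>c d\<bar>)"
  define B where "B = (\<Sum>d=1..M. \<Sum>i=1..M. \<bar>F0 d i\<bar>)"
  define \<eta> where "\<eta> = 1 / (4 * (S + 1))"
  define \<epsilon> where "\<epsilon> = 1 / (4 * (real M + 1) * (B + 1))"
  have S0: "S \<ge> 0" unfolding S_def by (intro sum_nonneg) auto
  have B0: "B \<ge> 0" unfolding B_def by (intro sum_nonneg) auto
  have eta0: "\<eta> > 0" using S0 unfolding \<eta>_def by simp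
  have eps0: "\<epsilon> > 0" using B0 unfolding \<epsilon>_def by simp
  have eta4: "\<eta> \<le> 1/4" using S0 unfolding \<eta>_def by (simp add: field_simps)
  have h4: "S * \<eta> \<le> 1/4" using S0 unfolding \<eta>_def by (simp add: field_simps)
  have h5: "real M * (\<epsilon> * (B + \<eta>)) \<le> 1/4"
  proof -
    have "real M * (\<epsilon> * (B + \<eta>)) \<le> real M * (\<epsilon> * (B + 1))"
      using eta4 eps0 by (intro mult_left_mono) auto
    also have "\<dots> = real M / (4 * (real M + 1))"
    proof -
      have "B + 1 \<noteq> 0" using B0 by linarith
      then have "\<epsilon> * (B + 1) = 1 / (4 * (real M + 1))" unfolding \<epsilon>_def by simp
      then show ?thesis by simp
    qed
    also have "\<dots> \<le> 1/4" by (simp add: field_simps)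
    finally show ?thesis .
  qed
  have FB: "\<bar>F0 d i\<bar> \<le> B" if "d \<in> {1..M}" "i \<in> {1..M}" for d i
  proof -
    have "\<bar>F0 d i\<bar> \<le> (\<Sum>i=1..M. \<bar>F0 d i\<bar>)" using that by (intro member_le_sum) auto
    also have "\<dots> \<le> B" unfolding B_def using that by (intro member_le_sum[of _ _ "\<lambda>d. \<Sum>i=1..M. \<bar>F0 d i\<bar>"] sum_nonneg) auto
    finally show ?thesis .
  qed
  have cont_i: "isCont (\<lambda>t. f t (x i)) (th0 d)" if "d \<in> {1..M}" for d i
  proof -
    have o: "open (Theta \<times> (UNIV :: (real^'s) set))" using Theta_open by (intro open_Times) auto
    have "isCont (\<lambda>(th, v). f th v) (th0 d, x i)"
    proof -
      have "th0 d \<in> Theta" using th0T that by auto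
      then show ?thesis using f_cont unfolding continuous_on_eq_continuous_at[OF o] by auto
    qed
    moreover have c1: "isCont (\<lambda>t. (t, x i)) (th0 d)" by (intro continuous_intros)
    ultimately show ?thesis using isCont_o2[OF c1, of "\<lambda>(th, v). f th v"] by simp
  qed
  have "\<forall>d\<in>{1..M}. \<exists>\<delta>>0. \<forall>t. dist t (th0 d) < \<delta> \<longrightarrow> t \<in> Theta \<and> (\<forall>i\<in>{1..M}. \<bar>f t (x i) - F0 d i\<bar> < \<eta>)"
  proof
    fix d assume d: "d \<in> {1..M}"
    have ev1: "eventually (\<lambda>t. t \<in> Theta) (nhds (th0 d))"
      using Theta_open th0T d by (intro eventually_nhds_in_open) auto
    have "\<forall>i\<in>{1..M}. eventually (\<lambda>t. dist (f t (x i)) (f (th0 d) (x i)) < \<eta>) (nhds (th0 d))"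
      using cont_i[OF d] eta0 by (intro ballI cont_ev) auto
    then have ev2: "eventually (\<lambda>t. \<forall>i\<in>{1..M}. dist (f t (x i)) (f (th0 d) (x i)) < \<eta>) (nhds (th0 d))"
      by (intro eventually_ball_finite) auto
    have "eventually (\<lambda>t. t \<in> Theta \<and> (\<forall>i\<in>{1..M}. \<bar>f t (x i) - F0 d i\<bar> < \<eta>)) (nhds (th0 d))"
      using eventually_conj[OF ev1 ev2] by eventually_elim (auto simp: F0_def dist_real_def)
    then show "\<exists>\<delta>>0. \<forall>t. dist t (th0 d) < \<delta> \<longrightarrow> t \<in> Theta \<and> (\<forall>i\<in>{1..M}. \<bar>f t (x i) - F0 d i\<bar> < \<eta>)"
      unfolding eventually_nhds_metric by blast
  qed
  then obtain \<delta> where \<delta>: "\<forall>d\<in>{1..M}. \<delta> d > 0 \<and> (\<forall>t. dist t (th0 d) < \<delta> d \<longrightarrow> t \<in> Theta \<and> (\<forall>i\<in>{1..M}. \<bar>f t (x i) - F0 d i\<bar> < \<eta>))"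
    by (metis (no_types, lifting) bchoice)
  define iv where "iv w = (if fst w = 0 then {c (snd (snd (snd w))) - \<epsilon> <..< c (snd (snd (snd w))) + \<epsilon>} else {-1<..<(1::real)})"
    for w :: "nat \<times> nat \<times> nat \<times> nat"
  define B1 where "B1 = PiE {1..M} (\<lambda>d. ball (th0 d) (\<delta> d))"
  define B2 where "B2 = PiE W iv"
  have B1s: "B1 \<in> sets (PiM {1..M} (\<lambda>_. lborel))" unfolding B1_def by (intro sets_box) auto
  have B2s: "B2 \<in> sets (PiM W (\<lambda>_. lborel))" unfolding B2_def using finW by (intro sets_box) (auto simp: iv_def)
  have B1p: "emeasure (PiM {1..M} (\<lambda>_. lborel)) B1 > 0" unfolding B1_def
  proof (intro box_pos)
    fix d assume d: "d \<in> {1..M}"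
    show "emeasure lborel (ball (th0 d) (\<delta> d)) > 0"
    proof (rule ccontr)
      assume "\<not> ?thesis"
      then have "emeasure lborel (ball (th0 d) (\<delta> d)) = 0" by simp
      then have "measure lborel (ball (th0 d) (\<delta> d)) = 0" by (simp add: measure_def)
      with content_ball_pos[of "\<delta> d" "th0 d"] \<delta> d show False by auto
    qed
  qed auto
  have B2p: "emeasure (PiM W (\<lambda>_. lborel)) B2 > 0" unfolding B2_def
    using finW eps0 by (intro box_pos) (auto simp: iv_def)
  define A where "A = B1 \<times> B2"
  have As: "A \<in> sets (deep_param_measure M W)"
    unfolding A_def deep_param_measure_def using B1s B2s by simp
  have Ap: "emeasure (deep_param_measure M W) A > 0"
    unfolding A_def deep_param_measure_def using B1s B2s B1p B2p sf_box[OF finW]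
    by (intro pair_pos) auto
  have AD: "A \<subseteq> D"
  proof
    fix q assume "q \<in> A"
    then obtain th a where q: "q = (th, a)" "th \<in> B1" "a \<in> B2" unfolding A_def by auto
    have "th \<in> PiE {1..M} (\<lambda>_. Theta)"
      using q(2) \<delta> unfolding B1_def by (auto simp: PiE_iff dist_commute)
    moreover have "a \<in> PiE W (\<lambda>_. UNIV)" using q(3) unfolding B2_def by (auto simp: PiE_iff)
    ultimately show "q \<in> D" unfolding D_def q by auto
  qed
  have key: "(\<Sum>d=1..M. a (0, j, g, d) * f (th d) (x i)) < 0"
    if "(th, a) \<in> A" "j \<in> {1..N}" "g \<in> {1..r 0}" "i \<in> {1..M}" for th a j g i
  proof -
    have th: "th \<in> B1" and a: "a \<in> B2" using that(1) unfolding A_def by auto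
    have inW: "(0, j, g, d) \<in> W" if "d \<in> {1..M}" for d
      using that \<open>j \<in> {1..N}\<close> \<open>g \<in> {1..r 0}\<close> unfolding W_def deep_weight_index_def by blast
    show ?thesis
    proof (rule key_ineq[where gv = "\<lambda>d. F0 d i" and c = c and B = B and \<eta> = \<eta> and \<epsilon> = \<epsilon>])
      show "finite {1..M}" by simp
      show "(\<Sum>d\<in>{1..M}. c d * F0 d i) = -1" using csum that(4) by simp
      show "\<forall>d\<in>{1..M}. \<bar>f (th d) (x i) - F0 d i\<bar> < \<eta>"
        using th \<delta> that(4) unfolding B1_def by (auto simp: PiE_iff dist_commute)
      show "\<forall>d\<in>{1..M}. \<bar>a (0, j, g, d) - c d\<bar> < \<epsilon>"
      proof
        fix d assume d: "d \<in> {1..M}"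
        have "a (0, j, g, d) \<in> iv (0, j, g, d)" using a inW[OF d] unfolding B2_def by (auto simp: PiE_iff)
        then show "\<bar>a (0, j, g, d) - c d\<bar> < \<epsilon>" unfolding iv_def by auto
      qed
      show "\<forall>d\<in>{1..M}. \<bar>F0 d i\<bar> \<le> B" using FB that(4) by auto
      show "(\<Sum>d\<in>{1..M}. \<bar>c d\<bar>) * \<eta> \<le> 1/4" using h4 unfolding S_def by simp
      show "real (card {1..M}) * (\<epsilon> * (B + \<eta>)) \<le> 1/4" using h5 by simp
    qed
  qed
  have NL: "2 * 2 ^ (L - 1) = N" using L_pos unfolding N_def by (cases L) auto
  have good: "\<exists>th' b c. (\<forall>d\<in>{1..M}. th' d \<in> Theta) \<and>
                 grid_tensor x M N (shallow1_score f M N th' b c)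
                   = grid_tensor x M N (deep_score f M L r y th a)"
    if q: "(th, a) \<in> A" for th a
  proof (intro exI conjI)
    show "\<forall>d\<in>{1..M}. th d \<in> Theta" using AD q unfolding D_def by (auto simp: PiE_iff)
    show "grid_tensor x M N (shallow1_score f M N th 0 (\<lambda>_ _. 0))
                   = grid_tensor x M N (deep_score f M L r y th a)"
      unfolding grid_tensor_def
    proof (rule restrict_ext)
      fix dd assume dd: "dd \<in> PiE {1..N} (\<lambda>_. {1..M})"
      have h: "(\<Sum>d = 1..M. a (0, j, g, d) * f (th d) ((\<lambda>i. x (dd i)) j)) \<le> 0"
        if "1 \<le> j" "j \<le> N" "g \<in> {1..r 0}" for j g
        using key[OF q, of j g "dd j"] dd that by (auto simp: PiE_iff less_imp_le)
      have z: "deep_u f M r th a (\<lambda>i. x (dd i)) (L - 1) j al = 0"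
        if "j \<in> {1, 2}" "al \<in> {1..r (L - 1)}" for j al
        using deep_zero[where X = "\<lambda>i. x (dd i)" and N = N and r = r and M = M and a = a and f = f and th = th, OF h, of j "L - 1" al] that NL by auto
      show "shallow1_score f M N th 0 (\<lambda>_ _. 0) (\<lambda>i. x (dd i)) = deep_score f M L r y th a (\<lambda>i. x (dd i))"
        unfolding shallow1_score_def deep_score_def using z by simp
    qed
  qed
  have "A \<subseteq> {(th, a) \<in> D. \<exists>th' b c. (\<forall>d\<in>{1..M}. th' d \<in> Theta) \<and>
                 grid_tensor x M N (shallow1_score f M N th' b c)
                   = grid_tensor x M N (deep_score f M L r y th a)}"
    using AD good by auto
  moreover have "emeasure (density (deep_param_measure M W) (\<lambda>q. ennreal (p q))) A > 0"
    using As Ap p_meas p_pos AD by (intro dens_pos) auto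
  ultimately show ?thesis using As by blast
qed

end
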